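(* Let $i_1>\dots>i_l$ with $i_1\le n-2$, and let $a_{n-1},a_{i_1},\dots,a_{i_l}$ be positive integers. A saturated homogeneous ideal $I\subseteq S$ with Hilbert polynomial $Q(n-1,i_1,\dots,i_l;a_{n-1},a_{i_1},\dots,a_{i_l})$ is Borel fixed if and only if $I=x_0^{a_{n-1}}J$ where $J$ is a Borel fixed (saturated) ideal with Hilbert polynomial $Q(i_1,\dots,i_l;a_{i_1},\dots,a_{i_l})$.
   Context: $k$ algebraically closed of characteristic $0$, $S=k[x_0,\dots,x_n]$. Notation $Q$: for integers $i_1>i_2>\dots>i_l\ge 0$ and positive integers $a_{i_1},\dots,a_{i_l}$, put $a_j=0$ for $j\notin\{i_1,\dots,i_l\}$, $m_i=\sum_{j\ge i}a_j$ for $0\le i\le i_1$, and $Q(i_1,\dots,i_l;a_{i_1},\dots,a_{i_l})(t)=\sum_{i=0}^{i_1}\left[\binom{t+i}{i+1}-\binom{t+i-m_i}{i+1}\right]$ (the Macaulay expansion; every Hilbert polynomial of a nonempty subscheme of projective space is uniquely of this form, with $Q=0$-free part $l\ge 0$). The Hilbert polynomial of $I$ means that of $S/I$. A monomial ideal $I$ is Borel fixed iff for every monomial $m\in I$ divisible by $x_j$ one has $m x_i/x_j\in I$ for all $i<j$ (equivalently it is fixed by the upper triangular matrices acting via $x_i\mapsto\sum_j a_{ij}x_j$). *)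

theory Defs
  imports "HOL-Library.Poly_Mapping" "HOL-Computational_Algebra.Polynomial"
begin

text \<open>S n = k[x_0,...,x_n] is the
  subset of polynomials whose monomials only involve variables x_0..x_n.\<close>

type_synonym 'k mpoly = "(nat \<Rightarrow>\<^sub>0 nat) \<Rightarrow>\<^sub>0 'k"

definition monom :: "'k::zero \<Rightarrow> (nat \<Rightarrow>\<^sub>0 nat) \<Rightarrow> 'k mpoly" where
  "monom c \<alpha> = Poly_Mapping.single \<alpha> c"

definition mdeg :: "(nat \<Rightarrow>\<^sub>0 nat) \<Rightarrow> nat" where
  "mdeg \<alpha> = (\<Sum>j\<in>Poly_Mapping.keys \<alpha>. Poly_Mapping.lookup \<alpha> j)"

definition Spoly :: "nat \<Rightarrow> ('k::zero) mpoly set" where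
  "Spoly n = {p. \<forall>\<alpha>\<in>Poly_Mapping.keys p. Poly_Mapping.keys \<alpha> \<subseteq> {..n}}"

definition Shom :: "nat \<Rightarrow> nat \<Rightarrow> ('k::zero) mpoly set" where
  "Shom n t = {p \<in> Spoly n. \<forall>\<alpha>\<in>Poly_Mapping.keys p. mdeg \<alpha> = t}"

definition hcomp :: "nat \<Rightarrow> ('k::comm_monoid_add) mpoly \<Rightarrow> 'k mpoly" where
  "hcomp d p = (\<Sum>\<alpha>\<in>{\<alpha>\<in>Poly_Mapping.keys p. mdeg \<alpha> = d}. monom (Poly_Mapping.lookup p \<alpha>) \<alpha>)"

definition is_ideal :: "nat \<Rightarrow> ('k::comm_ring_1) mpoly set \<Rightarrow> bool" where
  "is_ideal n I \<longleftrightarrow> I \<subseteq> Spoly n \<and> 0 \<in> I \<and> (\<forall>p\<in>I. \<forall>q\<in>I. p + q \<in> I)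
     \<and> (\<forall>f\<in>Spoly n. \<forall>p\<in>I. f * p \<in> I)"

definition homogeneous_ideal :: "nat \<Rightarrow> ('k::comm_ring_1) mpoly set \<Rightarrow> bool" where
  "homogeneous_ideal n I \<longleftrightarrow> is_ideal n I \<and> (\<forall>p\<in>I. \<forall>d. hcomp d p \<in> I)"

text \<open>Saturated: I = I : (x_0,...,x_n)^\<infinity>.\<close>
definition saturated :: "nat \<Rightarrow> ('k::comm_ring_1) mpoly set \<Rightarrow> bool" where
  "saturated n I \<longleftrightarrow> (\<forall>f\<in>Spoly n. (\<exists>N. \<forall>j\<le>n. monom 1 (Poly_Mapping.single j N) * f \<in> I) \<longrightarrow> f \<in> I)"

definition monomial_ideal :: "nat \<Rightarrow> ('k::comm_ring_1) mpoly set \<Rightarrow> bool" where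
  "monomial_ideal n I \<longleftrightarrow> is_ideal n I \<and> (\<forall>p\<in>I. \<forall>\<alpha>\<in>Poly_Mapping.keys p. monom 1 \<alpha> \<in> I)"

definition borel_fixed :: "nat \<Rightarrow> ('k::comm_ring_1) mpoly set \<Rightarrow> bool" where
  "borel_fixed n I \<longleftrightarrow> monomial_ideal n I \<and>
     (\<forall>\<alpha> i j. monom 1 \<alpha> \<in> I \<longrightarrow> i < j \<longrightarrow> 0 < Poly_Mapping.lookup \<alpha> j \<longrightarrow>
        monom 1 (\<alpha> - Poly_Mapping.single j 1 + Poly_Mapping.single i 1) \<in> I)"

definition lin_indep :: "('k::field) mpoly set \<Rightarrow> bool" where
  "lin_indep B \<longleftrightarrow> (\<forall>c. (\<Sum>b\<in>B. monom (c b) 0 * b) = 0 \<longrightarrow> (\<forall>b\<in>B. c b = 0))"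

definition kdim :: "('k::field) mpoly set \<Rightarrow> nat" where
  "kdim V = Max {card B | B. finite B \<and> B \<subseteq> V \<and> lin_indep B}"

text \<open>Hilbert function of S/I: dim_k (S/I)_t = dim_k S_t - dim_k I_t.\<close>
definition hilbert_fn :: "nat \<Rightarrow> ('k::field) mpoly set \<Rightarrow> nat \<Rightarrow> nat" where
  "hilbert_fn n I t = kdim (Shom n t :: 'k mpoly set) - kdim (I \<inter> Shom n t)"

definition has_hilbert_poly :: "nat \<Rightarrow> ('k::field) mpoly set \<Rightarrow> (nat \<Rightarrow> real) \<Rightarrow> bool" where
  "has_hilbert_poly n I P \<longleftrightarrow> (\<exists>t0. \<forall>t\<ge>t0. real (hilbert_fn n I t) = P t)"

text \<open>Macaulay data: list is = [i_1,...,i_l] (strictly decreasing), list as = [a_{i_1},...,a_{i_l}].\<close>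
definition macaulay_data :: "nat list \<Rightarrow> nat list \<Rightarrow> bool" where
  "macaulay_data is as \<longleftrightarrow> length is = length as \<and> sorted_wrt (>) is \<and> (\<forall>a\<in>set as. 0 < a)"

definition coefQ :: "nat list \<Rightarrow> nat list \<Rightarrow> nat \<Rightarrow> nat" where
  "coefQ is as j = (\<Sum>k<length is. if is ! k = j then as ! k else 0)"

definition mQ :: "nat list \<Rightarrow> nat list \<Rightarrow> nat \<Rightarrow> nat" where
  "mQ is as i = (\<Sum>j\<in>{i..hd is}. coefQ is as j)"

text \<open>Q(i_1,...,i_l; a_{i_1},...,a_{i_l})(t) (for l \<ge> 1, i_1 = hd is).\<close>
definition Qpoly :: "nat list \<Rightarrow> nat list \<Rightarrow> nat \<Rightarrow> real" where
  "Qpoly is as t = (\<Sum>i=0..hd is.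
      ((real t + real i) gchoose (i + 1)) - ((real t + real i - real (mQ is as i)) gchoose (i + 1)))"

end

theory Submission imports Defs "HOL-Library.Multiset" "HOL-Library.FuncSet" begin

lemma lookup_monom_mult:
  fixes p :: "'k::comm_semiring_1 mpoly"
  shows "Poly_Mapping.lookup (monom c \<alpha> * p) (\<alpha> + \<beta>) = c * Poly_Mapping.lookup p \<beta>"
proof -
  have "Poly_Mapping.lookup (monom c \<alpha> * p) (\<alpha> + \<beta>) =
     (\<Sum>l. Poly_Mapping.lookup (monom c \<alpha>) l * (\<Sum>q. Poly_Mapping.lookup p q when \<alpha> + \<beta> = l + q))"
    by (rule lookup_mult)
  also have "\<dots> = (\<Sum>l. (c when \<alpha> = l) * (\<Sum>q. Poly_Mapping.lookup p q when \<alpha> + \<beta> = l + q))"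
    by (simp add: monom_def lookup_single when_mult)
  also have "\<dots> = (\<Sum>l. (c * (\<Sum>q. Poly_Mapping.lookup p q when \<alpha> + \<beta> = l + q)) when \<alpha> = l)"
    by (simp add: when_mult)
  also have "\<dots> = c * (\<Sum>q. Poly_Mapping.lookup p q when \<alpha> + \<beta> = \<alpha> + q)" by simp
  also have "(\<lambda>q. Poly_Mapping.lookup p q when \<alpha> + \<beta> = \<alpha> + q) = (\<lambda>q. Poly_Mapping.lookup p q when q = \<beta>)"
    by (auto simp: when_def)
  finally show ?thesis by simp
qed

lemma lookup_monom_mult_notin:
  fixes p :: "'k::comm_semiring_1 mpoly"
  assumes "\<not> (\<exists>\<beta>. \<gamma> = \<alpha> + \<beta>)"
  shows "Poly_Mapping.lookup (monom c \<alpha> * p) \<gamma> = 0"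
proof -
  have "Poly_Mapping.lookup (monom c \<alpha> * p) \<gamma> =
     (\<Sum>l. Poly_Mapping.lookup (monom c \<alpha>) l * (\<Sum>q. Poly_Mapping.lookup p q when \<gamma> = l + q))"
    by (rule lookup_mult)
  also have "\<dots> = (\<Sum>l. (c * (\<Sum>q. Poly_Mapping.lookup p q when \<gamma> = l + q)) when \<alpha> = l)"
    by (simp add: monom_def lookup_single when_mult)
  also have "\<dots> = c * (\<Sum>q. Poly_Mapping.lookup p q when \<gamma> = \<alpha> + q)" by simp
  also have "(\<lambda>q. Poly_Mapping.lookup p q when \<gamma> = \<alpha> + q) = (\<lambda>q. 0)"
    using assms by (auto simp: when_def)
  finally show ?thesis by simp
qed


lemma monom_mult: "monom (a::'k::comm_semiring_1) \<alpha> * monom b \<beta> = monom (a*b) (\<alpha>+\<beta>)"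
  by (simp add: monom_def mult_single)

lemma keys_monom: "Poly_Mapping.keys (monom c \<alpha>) = (if c = 0 then {} else {\<alpha>})"
  by (simp add: monom_def)

lemma lookup_monom: "Poly_Mapping.lookup (monom c \<alpha>) \<beta> = (if \<beta> = \<alpha> then c else 0)"
  by (simp add: monom_def lookup_single when_def)

lemma keys_monom1_mult:
  fixes p :: "'k::comm_semiring_1 mpoly"
  shows "Poly_Mapping.keys (monom 1 \<alpha> * p) = (\<lambda>\<beta>. \<alpha> + \<beta>) ` Poly_Mapping.keys p"
proof (intro set_eqI iffI)
  fix \<gamma> assume g: "\<gamma> \<in> Poly_Mapping.keys (monom 1 \<alpha> * p)"
  show "\<gamma> \<in> (\<lambda>\<beta>. \<alpha> + \<beta>) ` Poly_Mapping.keys p"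
  proof (cases "\<exists>\<beta>. \<gamma> = \<alpha> + \<beta>")
    case True
    then obtain \<beta> where b: "\<gamma> = \<alpha> + \<beta>" by blast
    with g lookup_monom_mult[of 1 \<alpha> p \<beta>] show ?thesis
      by (auto simp: in_keys_iff)
  next
    case False
    with g lookup_monom_mult_notin[OF False, of 1 p] show ?thesis by (auto simp: in_keys_iff)
  qed
next
  fix \<gamma> assume "\<gamma> \<in> (\<lambda>\<beta>. \<alpha> + \<beta>) ` Poly_Mapping.keys p"
  then obtain \<beta> where "\<gamma> = \<alpha> + \<beta>" "\<beta> \<in> Poly_Mapping.keys p" by blast
  then show "\<gamma> \<in> Poly_Mapping.keys (monom 1 \<alpha> * p)"
    using lookup_monom_mult[of 1 \<alpha> p \<beta>] by (auto simp: in_keys_iff)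
qed

lemma poly_expand:
  fixes p :: "'k::comm_monoid_add mpoly"
  shows "p = (\<Sum>\<alpha>\<in>Poly_Mapping.keys p. monom (Poly_Mapping.lookup p \<alpha>) \<alpha>)"
proof (rule poly_mapping_eqI)
  fix \<gamma>
  have "Poly_Mapping.lookup (\<Sum>\<alpha>\<in>Poly_Mapping.keys p. monom (Poly_Mapping.lookup p \<alpha>) \<alpha>) \<gamma>
     = (\<Sum>\<alpha>\<in>Poly_Mapping.keys p. if \<gamma> = \<alpha> then Poly_Mapping.lookup p \<alpha> else 0)"
    by (simp add: lookup_sum lookup_monom)
  also have "\<dots> = Poly_Mapping.lookup p \<gamma>"
    by (simp add: sum.delta in_keys_iff)
  finally show "Poly_Mapping.lookup p \<gamma> = Poly_Mapping.lookup (\<Sum>\<alpha>\<in>Poly_Mapping.keys p. monom (Poly_Mapping.lookup p \<alpha>) \<alpha>) \<gamma>"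
    by simp
qed

lemma mdeg_superset:
  assumes "finite K" "Poly_Mapping.keys \<alpha> \<subseteq> K"
  shows "mdeg \<alpha> = (\<Sum>j\<in>K. Poly_Mapping.lookup \<alpha> j)"
  unfolding mdeg_def
  by (rule sum.mono_neutral_left) (use assms in \<open>auto simp: in_keys_iff\<close>)

lemma mdeg_add: "mdeg (\<alpha> + \<beta>) = mdeg \<alpha> + mdeg \<beta>"
proof -
  let ?K = "Poly_Mapping.keys \<alpha> \<union> Poly_Mapping.keys \<beta>"
  have "mdeg (\<alpha> + \<beta>) = (\<Sum>j\<in>?K. Poly_Mapping.lookup (\<alpha>+\<beta>) j)"
    by (rule mdeg_superset) (auto dest: subsetD[OF keys_add])
  also have "\<dots> = (\<Sum>j\<in>?K. Poly_Mapping.lookup \<alpha> j) + (\<Sum>j\<in>?K. Poly_Mapping.lookup \<beta> j)"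
    by (simp add: lookup_add sum.distrib)
  also have "\<dots> = mdeg \<alpha> + mdeg \<beta>"
    by (simp add: mdeg_superset[symmetric])
  finally show ?thesis .
qed

lemma mdeg_single[simp]: "mdeg (Poly_Mapping.single j k) = k"
  by (simp add: mdeg_def)

lemma mdeg_zero[simp]: "mdeg 0 = 0"
  by (simp add: mdeg_def)

lemma monom_in_Spoly: "Poly_Mapping.keys \<alpha> \<subseteq> {..n} \<Longrightarrow> monom c \<alpha> \<in> Spoly n"
  by (simp add: Spoly_def keys_monom)

lemma monom0_in_Spoly[simp]: "monom c 0 \<in> Spoly n"
  by (simp add: Spoly_def keys_monom)

lemma Spoly_add: "p \<in> Spoly n \<Longrightarrow> q \<in> Spoly n \<Longrightarrow> p + q \<in> Spoly n"
  unfolding Spoly_def by (auto dest!: subsetD[OF keys_add])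

lemma Spoly_mult:
  fixes p q :: "'k::comm_semiring_1 mpoly"
  assumes p: "p \<in> Spoly n" and q: "q \<in> Spoly n"
  shows "p * q \<in> Spoly n"
  unfolding Spoly_def
proof (intro CollectI ballI subsetI)
  fix \<gamma> j
  assume g: "\<gamma> \<in> Poly_Mapping.keys (p * q)" and j: "j \<in> Poly_Mapping.keys \<gamma>"
  from subsetD[OF keys_mult g] obtain a b where ab: "\<gamma> = a + b" "a \<in> Poly_Mapping.keys p" "b \<in> Poly_Mapping.keys q"
    by blast
  with j subsetD[OF keys_add[of a b]] p q show "j \<in> {..n}" by (auto simp: Spoly_def)
qed

lemma zero_Spoly[simp]: "0 \<in> Spoly n"
  by (simp add: Spoly_def)

lemma Spoly_sum: "finite F \<Longrightarrow> (\<And>x. x \<in> F \<Longrightarrow> f x \<in> Spoly n) \<Longrightarrow> sum f F \<in> Spoly n"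
  by (induction F rule: finite_induct) (auto intro!: Spoly_add)

lemma Spoly_monom_keys: "p \<in> Spoly n \<Longrightarrow> \<alpha> \<in> Poly_Mapping.keys p \<Longrightarrow> monom c \<alpha> \<in> Spoly n"
  by (auto simp: Spoly_def keys_monom)

lemma ideal_sum:
  assumes "is_ideal n I" "finite F" "\<And>x. x \<in> F \<Longrightarrow> f x \<in> I"
  shows "sum f F \<in> I"
  using assms(2,3) by (induction F rule: finite_induct) (use assms(1) in \<open>auto simp: is_ideal_def\<close>)

lemma ideal_mult: "is_ideal n I \<Longrightarrow> f \<in> Spoly n \<Longrightarrow> p \<in> I \<Longrightarrow> f * p \<in> I"
  by (simp add: is_ideal_def)

lemma ideal_monom_scale:
  fixes I :: "'k::comm_ring_1 mpoly set"
  assumes "is_ideal n I" "monom 1 \<alpha> \<in> I"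
  shows "monom c \<alpha> \<in> I"
proof -
  have "monom c 0 * monom 1 \<alpha> \<in> I" by (rule ideal_mult[OF assms(1) monom0_in_Spoly assms(2)])
  then show ?thesis by (simp add: monom_mult)
qed

lemma monomial_ideal_iff:
  fixes I :: "'k::comm_ring_1 mpoly set"
  assumes "monomial_ideal n I"
  shows "p \<in> I \<longleftrightarrow> (\<forall>\<alpha>\<in>Poly_Mapping.keys p. monom 1 \<alpha> \<in> I)"
proof
  assume "\<forall>\<alpha>\<in>Poly_Mapping.keys p. monom 1 \<alpha> \<in> I"
  then have "(\<Sum>\<alpha>\<in>Poly_Mapping.keys p. monom (Poly_Mapping.lookup p \<alpha>) \<alpha>) \<in> I"
    using assms by (intro ideal_sum[of n]) (auto simp: monomial_ideal_def intro: ideal_monom_scale)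
  then show "p \<in> I" using poly_expand[of p] by simp
qed (use assms in \<open>auto simp: monomial_ideal_def\<close>)


section \<open>Linear algebra\<close>

lemma monom_add: "monom (a + b) \<alpha> = monom a \<alpha> + (monom b \<alpha> :: 'k::comm_monoid_add mpoly)"
  by (simp add: monom_def single_add)

interpretation mv: vector_space "\<lambda>c (p::'k::field mpoly). monom c 0 * p"
  by unfold_locales (simp_all add: distrib_left distrib_right monom_add monom_mult mult.assoc[symmetric],
      simp add: monom_def)

lemma lin_indep_imp_independent:
  fixes B :: "'k::field mpoly set"
  assumes fin: "finite B" and li: "lin_indep B"
  shows "mv.independent B"
  unfolding mv.independent_explicit_finite_subsets
proof (intro allI impI ballI)
  fix S u v
  assume S: "S \<subseteq> B" "finite S" and z: "(\<Sum>v\<in>S. monom (u v) 0 * v) = 0" and v: "v \<in> S"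
  define c where "c = (\<lambda>b. if b \<in> S then u b else 0)"
  have "(\<Sum>b\<in>B. monom (c b) 0 * b) = (\<Sum>b\<in>S. monom (c b) 0 * b)"
    by (rule sum.mono_neutral_right[OF fin S(1)]) (auto simp: c_def monom_def)
  also have "\<dots> = 0" using z by (simp add: c_def)
  finally have "\<forall>b\<in>B. c b = 0" using li by (simp add: lin_indep_def)
  then have "c v = 0" using v S by blast
  with v show "u v = 0" by (simp add: c_def)
qed

lemma V_subset_span:
  fixes M :: "(nat \<Rightarrow>\<^sub>0 nat) set"
  shows "{p :: 'k::field mpoly. Poly_Mapping.keys p \<subseteq> M} \<subseteq> mv.span ((monom 1) ` M)"
proof
  fix p :: "'k mpoly" assume "p \<in> {p. Poly_Mapping.keys p \<subseteq> M}"
  then have pM: "Poly_Mapping.keys p \<subseteq> M" by simp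
  have "(\<Sum>\<alpha>\<in>Poly_Mapping.keys p. monom (Poly_Mapping.lookup p \<alpha>) 0 * monom 1 \<alpha>) \<in> mv.span ((monom 1) ` M)"
    by (intro mv.span_sum mv.span_scale mv.span_base) (use pM in auto)
  also have "(\<Sum>\<alpha>\<in>Poly_Mapping.keys p. monom (Poly_Mapping.lookup p \<alpha>) 0 * monom 1 \<alpha>) = p"
    by (subst (2) poly_expand) (simp add: monom_mult)
  finally show "p \<in> mv.span ((monom 1) ` M)" .
qed

lemma lin_indep_monoms:
  fixes M :: "(nat \<Rightarrow>\<^sub>0 nat) set"
  assumes "finite M"
  shows "lin_indep ((monom (1::'k::field)) ` M)"
  unfolding lin_indep_def
proof (intro allI impI ballI)
  fix c and b :: "'k mpoly" assume z: "(\<Sum>b\<in>(monom (1::'k)) ` M. monom (c b) 0 * b) = 0" and b: "b \<in> monom 1 ` M"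
  have inj: "inj_on (monom (1::'k)) M"
    by (rule inj_onI) (metis monom_def lookup_single_eq lookup_single_not_eq zero_neq_one)
  have "(\<Sum>\<alpha>\<in>M. monom (c (monom 1 \<alpha>)) \<alpha>) = 0"
    using z by (simp add: sum.reindex[OF inj] monom_mult)
  then have "\<And>\<gamma>. Poly_Mapping.lookup (\<Sum>\<alpha>\<in>M. monom (c (monom 1 \<alpha>)) \<alpha>) \<gamma> = 0" by simp
  then have "\<And>\<gamma>. (\<Sum>\<alpha>\<in>M. if \<gamma> = \<alpha> then c (monom 1 \<alpha>) else 0) = 0"
    by (simp add: lookup_sum lookup_monom)
  then have "\<And>\<gamma>. \<gamma> \<in> M \<Longrightarrow> c (monom 1 \<gamma>) = 0"
    using sum.delta'[OF assms] by metis
  with b show "c b = 0" by auto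
qed

lemma kdim_V:
  fixes M :: "(nat \<Rightarrow>\<^sub>0 nat) set"
  assumes fin: "finite M"
  shows "kdim {p :: 'k::field mpoly. Poly_Mapping.keys p \<subseteq> M} = card M"
proof -
  let ?V = "{p :: 'k mpoly. Poly_Mapping.keys p \<subseteq> M}"
  let ?S = "{card B |B. finite B \<and> B \<subseteq> ?V \<and> lin_indep B}"
  have inj: "inj_on (monom (1::'k)) M"
    by (rule inj_onI) (metis monom_def lookup_single_eq lookup_single_not_eq zero_neq_one)
  have ub: "x \<le> card M" if "x \<in> ?S" for x
  proof -
    from that obtain B where B: "x = card B" "finite B" "B \<subseteq> ?V" "lin_indep B" by blast
    have "mv.independent B" by (rule lin_indep_imp_independent) (use B in auto)
    moreover have "B \<subseteq> mv.span ((monom 1) ` M)" using B(3) V_subset_span by blast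
    ultimately have "card B \<le> card ((monom (1::'k)) ` M)"
      using mv.independent_span_bound[of "(monom 1) ` M" B] fin by auto
    also have "\<dots> = card M" by (rule card_image[OF inj])
    finally show ?thesis using B by simp
  qed
  have mem: "card M \<in> ?S"
  proof -
    have "card ((monom (1::'k)) ` M) \<in> ?S"
      using fin lin_indep_monoms[OF fin] by (auto simp: keys_monom)
    then show ?thesis by (simp add: card_image[OF inj])
  qed
  have fS: "finite ?S" by (rule finite_subset[of _ "{..card M}"]) (use ub in auto)
  show ?thesis unfolding kdim_def
    by (rule Max_eqI[OF fS]) (use ub mem in auto)
qed


section \<open>Monomials of given degree\<close>

definition Mons :: "nat \<Rightarrow> nat \<Rightarrow> (nat \<Rightarrow>\<^sub>0 nat) set" where
  "Mons n t = {\<alpha>. Poly_Mapping.keys \<alpha> \<subseteq> {..n} \<and> mdeg \<alpha> = t}"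

definition MI :: "nat \<Rightarrow> ('k::zero_neq_one) mpoly set \<Rightarrow> nat \<Rightarrow> (nat \<Rightarrow>\<^sub>0 nat) set" where
  "MI n I t = {\<alpha> \<in> Mons n t. monom (1::'k) \<alpha> \<in> I}"

definition pm_of_ms :: "nat multiset \<Rightarrow> (nat \<Rightarrow>\<^sub>0 nat)" where
  "pm_of_ms M = Abs_poly_mapping (count M)"

lemma lookup_pm_of_ms[simp]: "Poly_Mapping.lookup (pm_of_ms M) = count M"
proof -
  have "{x. count M x \<noteq> 0} = set_mset M" by (auto simp: not_in_iff[symmetric])
  then have "finite {x. count M x \<noteq> 0}" by simp
  then show ?thesis by (simp add: pm_of_ms_def)
qed

lemma keys_pm_of_ms[simp]: "Poly_Mapping.keys (pm_of_ms M) = set_mset M"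
  by (auto simp: in_keys_iff)

lemma mdeg_pm_of_ms[simp]: "mdeg (pm_of_ms M) = size M"
  by (simp add: mdeg_def size_multiset_overloaded_eq)

lemma Mons_image: "Mons n t = pm_of_ms ` multisets_of_size {..n} t"
proof (intro set_eqI iffI)
  fix \<alpha> assume a: "\<alpha> \<in> Mons n t"
  define M where "M = Abs_multiset (Poly_Mapping.lookup \<alpha>)"
  have fin: "finite {x. 0 < Poly_Mapping.lookup \<alpha> x}"
    using finite_lookup[of \<alpha>] by (simp add: gr0_conv_Suc)
  have cM: "count M = Poly_Mapping.lookup \<alpha>" unfolding M_def by (rule count_Abs_multiset[OF fin])
  have "pm_of_ms M = \<alpha>" by (rule poly_mapping_eqI) (simp add: cM)
  moreover have "M \<in> multisets_of_size {..n} t"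
  proof -
    have "set_mset M = Poly_Mapping.keys \<alpha>" using keys_pm_of_ms[of M] \<open>pm_of_ms M = \<alpha>\<close> by simp
    moreover have "size M = mdeg \<alpha>" using mdeg_pm_of_ms[of M] \<open>pm_of_ms M = \<alpha>\<close> by simp
    ultimately show ?thesis using a by (simp add: Mons_def multisets_of_size_def)
  qed
  ultimately show "\<alpha> \<in> pm_of_ms ` multisets_of_size {..n} t" by blast
qed (auto simp: Mons_def multisets_of_size_def)

lemma inj_pm_of_ms: "inj pm_of_ms"
proof (rule injI)
  fix M N assume "pm_of_ms M = pm_of_ms N"
  then have "Poly_Mapping.lookup (pm_of_ms M) = Poly_Mapping.lookup (pm_of_ms N)" by simp
  then have "count M = count N" by simp
  then show "M = N" by (simp add: multiset_eqI)
qed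

lemma card_Mons: "card (Mons n t) = (t + n) choose n"
proof -
  have "card (Mons n t) = card (multisets_of_size {..n} t)"
    unfolding Mons_image by (rule card_image) (rule inj_on_subset[OF inj_pm_of_ms], simp)
  also have "\<dots> = (Suc n + t - 1) choose t" by (simp add: card_multisets_of_size)
  also have "\<dots> = (t + n) choose t" by (simp add: add.commute)
  also have "\<dots> = (t + n) choose n" using binomial_symmetric[of t "t+n"] by simp
  finally show ?thesis .
qed

lemma finite_Mons[simp]: "finite (Mons n t)"
  unfolding Mons_image by (intro finite_imageI finite_multisets_of_size) simp

lemma Shom_eq: "Shom n t = {p. Poly_Mapping.keys p \<subseteq> Mons n t}"
  by (auto simp: Shom_def Spoly_def Mons_def)

lemma monomial_ideal_Shom:
  fixes I :: "'k::comm_ring_1 mpoly set"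
  assumes "monomial_ideal n I"
  shows "I \<inter> Shom n t = {p. Poly_Mapping.keys p \<subseteq> MI n I t}"
proof (intro set_eqI iffI)
  fix p :: "'k mpoly" assume "p \<in> I \<inter> Shom n t"
  then have "p \<in> I" "Poly_Mapping.keys p \<subseteq> Mons n t" by (auto simp: Shom_eq)
  with monomial_ideal_iff[OF assms, of p] show "p \<in> {p. Poly_Mapping.keys p \<subseteq> MI n I t}"
    unfolding MI_def by blast
next
  fix p :: "'k mpoly" assume "p \<in> {p. Poly_Mapping.keys p \<subseteq> MI n I t}"
  then have k: "Poly_Mapping.keys p \<subseteq> MI n I t" by simp
  then have "p \<in> I" using monomial_ideal_iff[OF assms, of p] unfolding MI_def by blast
  moreover have "p \<in> Shom n t" using k unfolding Shom_eq MI_def by blast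
  ultimately show "p \<in> I \<inter> Shom n t" by blast
qed

lemma hilbert_fn_monomial:
  fixes I :: "'k::field mpoly set"
  assumes "monomial_ideal n I"
  shows "hilbert_fn n I t = card (Mons n t) - card (MI n I t)"
proof -
  have fin: "finite (MI n I t)" by (rule finite_subset[OF _ finite_Mons[of n t]]) (auto simp: MI_def)
  have 1: "kdim (I \<inter> Shom n t) = card (MI n I t)"
    unfolding monomial_ideal_Shom[OF assms] by (rule kdim_V[OF fin])
  have 2: "kdim (Shom n t :: 'k mpoly set) = card (Mons n t)"
    unfolding Shom_eq by (rule kdim_V) simp
  show ?thesis unfolding hilbert_fn_def 1 2 ..
qed

lemma MI_subset: "MI n I t \<subseteq> Mons n t" by (auto simp: MI_def)


definition ple :: "(nat \<Rightarrow>\<^sub>0 nat) \<Rightarrow> (nat \<Rightarrow>\<^sub>0 nat) \<Rightarrow> bool" where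
  "ple \<gamma> \<alpha> \<longleftrightarrow> (\<forall>j. Poly_Mapping.lookup \<gamma> j \<le> Poly_Mapping.lookup \<alpha> j)"

lemma pm_split: "ple \<gamma> \<alpha> \<Longrightarrow> \<gamma> + (\<alpha> - \<gamma>) = \<alpha>"
  by (rule poly_mapping_eqI) (simp add: ple_def lookup_add lookup_minus)

lemma keys_minus_sub: "Poly_Mapping.keys (\<alpha> - \<gamma>) \<subseteq> Poly_Mapping.keys (\<alpha>::nat \<Rightarrow>\<^sub>0 nat)"
  by (auto simp: in_keys_iff lookup_minus)

lemma mdeg_minus: "ple \<gamma> \<alpha> \<Longrightarrow> mdeg (\<alpha> - \<gamma>) = mdeg \<alpha> - mdeg \<gamma>"
  using mdeg_add[of \<gamma> "\<alpha> - \<gamma>"] pm_split[of \<gamma> \<alpha>] by simp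

lemma ple_add: "ple \<gamma> (\<gamma> + \<beta>)"
  by (simp add: ple_def lookup_add)

lemma add_minus_cancel_pm: "(\<gamma> + \<beta>) - \<gamma> = (\<beta>::nat \<Rightarrow>\<^sub>0 nat)"
  by (rule poly_mapping_eqI) (simp add: lookup_add lookup_minus)

lemma keys_add_sub: "Poly_Mapping.keys (\<alpha> + \<beta>) \<subseteq> Poly_Mapping.keys \<alpha> \<union> Poly_Mapping.keys (\<beta>::nat \<Rightarrow>\<^sub>0 nat)"
  by (rule keys_add)

lemma lookup_le_mdeg: "Poly_Mapping.lookup \<alpha> j \<le> mdeg \<alpha>"
proof (cases "j \<in> Poly_Mapping.keys \<alpha>")
  case True
  then show ?thesis unfolding mdeg_def by (intro member_le_sum) auto
qed (simp add: in_keys_iff)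

lemma mon_ple_in_ideal:
  fixes I :: "'k::comm_ring_1 mpoly set"
  assumes "is_ideal n I" "monom 1 \<delta> \<in> I" "ple \<delta> \<gamma>" "Poly_Mapping.keys \<gamma> \<subseteq> {..n}"
  shows "monom 1 \<gamma> \<in> I"
proof -
  have "monom (1::'k) (\<gamma> - \<delta>) \<in> Spoly n"
    using assms(4) keys_minus_sub[of \<gamma> \<delta>] by (intro monom_in_Spoly) blast
  then have "monom 1 (\<gamma> - \<delta>) * monom 1 \<delta> \<in> I" by (rule ideal_mult[OF assms(1) _ assms(2)])
  then show ?thesis using pm_split[OF assms(3)] by (simp add: monom_mult add.commute)
qed

section \<open>Shifting by powers of x_0\<close>

lemma shift_image:
  assumes "a \<le> t"
  shows "{\<alpha> \<in> Mons n t. a \<le> Poly_Mapping.lookup \<alpha> 0} = (\<lambda>\<beta>. Poly_Mapping.single 0 a + \<beta>) ` Mons n (t - a)"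
proof (intro set_eqI iffI)
  fix \<alpha> assume "\<alpha> \<in> {\<alpha> \<in> Mons n t. a \<le> Poly_Mapping.lookup \<alpha> 0}"
  then have a: "\<alpha> \<in> Mons n t" "a \<le> Poly_Mapping.lookup \<alpha> 0" by auto
  have p: "ple (Poly_Mapping.single 0 a) \<alpha>" using a(2) by (simp add: ple_def lookup_single when_def)
  have "\<alpha> - Poly_Mapping.single 0 a \<in> Mons n (t - a)"
    using a(1) keys_minus_sub[of \<alpha>] mdeg_minus[OF p] by (auto simp: Mons_def)
  moreover have "\<alpha> = Poly_Mapping.single 0 a + (\<alpha> - Poly_Mapping.single 0 a)" using pm_split[OF p] by simp
  ultimately show "\<alpha> \<in> (\<lambda>\<beta>. Poly_Mapping.single 0 a + \<beta>) ` Mons n (t - a)" by blast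
next
  fix \<alpha> assume "\<alpha> \<in> (\<lambda>\<beta>. Poly_Mapping.single 0 a + \<beta>) ` Mons n (t - a)"
  then obtain \<beta> where b: "\<alpha> = Poly_Mapping.single 0 a + \<beta>" "\<beta> \<in> Mons n (t - a)" by blast
  have "Poly_Mapping.keys \<alpha> \<subseteq> {..n}"
  proof
    fix x assume "x \<in> Poly_Mapping.keys \<alpha>"
    then have "x \<in> Poly_Mapping.keys (Poly_Mapping.single 0 a) \<union> Poly_Mapping.keys \<beta>"
      using b(1) keys_add_sub[of "Poly_Mapping.single 0 a" \<beta>] by blast
    then show "x \<in> {..n}" using b(2) by (auto simp: Mons_def split: if_splits)
  qed
  moreover have "mdeg \<alpha> = t" using b assms by (simp add: mdeg_add Mons_def)
  moreover have "a \<le> Poly_Mapping.lookup \<alpha> 0" using b by (simp add: lookup_add)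
  ultimately show "\<alpha> \<in> {\<alpha> \<in> Mons n t. a \<le> Poly_Mapping.lookup \<alpha> 0}" by (simp add: Mons_def)
qed

lemma inj_shift: "inj_on (\<lambda>\<beta>. \<gamma> + \<beta>) (X :: (nat \<Rightarrow>\<^sub>0 nat) set)"
  by (rule inj_onI) simp

lemma card_low:
  assumes "a \<le> t"
  shows "card {\<alpha> \<in> Mons n t. Poly_Mapping.lookup \<alpha> 0 < a} = card (Mons n t) - card (Mons n (t - a))"
proof -
  have "Mons n t = {\<alpha> \<in> Mons n t. Poly_Mapping.lookup \<alpha> 0 < a} \<union> {\<alpha> \<in> Mons n t. a \<le> Poly_Mapping.lookup \<alpha> 0}"
    by auto
  then have "card (Mons n t) = card {\<alpha> \<in> Mons n t. Poly_Mapping.lookup \<alpha> 0 < a} + card {\<alpha> \<in> Mons n t. a \<le> Poly_Mapping.lookup \<alpha> 0}"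
    by (metis (no_types, lifting) card_Un_disjoint finite_Mons finite_Un disjoint_iff mem_Collect_eq not_le)
  moreover have "card {\<alpha> \<in> Mons n t. a \<le> Poly_Mapping.lookup \<alpha> 0} = card (Mons n (t - a))"
    unfolding shift_image[OF assms] by (rule card_image[OF inj_shift])
  ultimately show ?thesis by simp
qed


section \<open>Borel moves\<close>

lemma borel_move:
  fixes I :: "'k::comm_ring_1 mpoly set"
  assumes B: "borel_fixed n I" and a: "monom 1 \<alpha> \<in> I" and ij: "i < j"
  shows "k \<le> Poly_Mapping.lookup \<alpha> j \<Longrightarrow>
    monom 1 (\<alpha> - Poly_Mapping.single j k + Poly_Mapping.single i k) \<in> I"
proof (induction k)
  case 0
  then show ?case using a by simp
next
  case (Suc k)
  let ?a = "\<alpha> - Poly_Mapping.single j k + Poly_Mapping.single i k"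
  have m: "monom 1 ?a \<in> I" using Suc by simp
  have pos: "0 < Poly_Mapping.lookup ?a j"
    using Suc.prems ij by (simp add: lookup_add lookup_minus lookup_single when_def)
  have "monom 1 (?a - Poly_Mapping.single j 1 + Poly_Mapping.single i 1) \<in> I"
    using B m ij pos unfolding borel_fixed_def by blast
  moreover have "?a - Poly_Mapping.single j 1 + Poly_Mapping.single i 1
      = \<alpha> - Poly_Mapping.single j (Suc k) + Poly_Mapping.single i (Suc k)"
    using Suc.prems ij
    by (intro poly_mapping_eqI) (simp add: lookup_add lookup_minus lookup_single when_def)
  ultimately show ?case by simp
qed

lemma borel_collect:
  fixes I :: "'k::comm_ring_1 mpoly set"
  assumes B: "borel_fixed n I"
  shows "monom 1 \<alpha> \<in> I \<Longrightarrow> Poly_Mapping.keys \<alpha> \<subseteq> {..m} \<Longrightarrow>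
    (\<forall>j<i. Poly_Mapping.lookup \<gamma> j = Poly_Mapping.lookup \<alpha> j) \<Longrightarrow>
    Poly_Mapping.lookup \<gamma> i = (\<Sum>l\<in>{i..m}. Poly_Mapping.lookup \<alpha> l) \<Longrightarrow>
    (\<forall>j>i. Poly_Mapping.lookup \<gamma> j = 0) \<Longrightarrow> monom 1 \<gamma> \<in> I"
proof (induction m arbitrary: \<alpha>)
  case 0
  have z: "\<And>j. 0 < j \<Longrightarrow> Poly_Mapping.lookup \<alpha> j = 0"
    using "0.prems"(2) by (auto simp: in_keys_iff)
  have "\<gamma> = \<alpha>"
  proof (rule poly_mapping_eqI)
    fix j
    consider "j < i" | "j = i" | "j > i" by linarith
    then show "Poly_Mapping.lookup \<gamma> j = Poly_Mapping.lookup \<alpha> j"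
    proof cases
      case 1 then show ?thesis using "0.prems" by blast
    next
      case 2 then show ?thesis using "0.prems"(4) z by (cases "i = 0") auto
    next
      case 3 then show ?thesis using "0.prems"(5) z by auto
    qed
  qed
  then show ?case using "0.prems" by simp
next
  case (Suc m)
  show ?case
  proof (cases "Suc m \<le> i")
    case True
    have z: "\<And>j. Suc m < j \<Longrightarrow> Poly_Mapping.lookup \<alpha> j = 0"
      using Suc.prems(2) by (auto simp: in_keys_iff)
    have "\<gamma> = \<alpha>"
    proof (rule poly_mapping_eqI)
      fix j
      consider "j < i" | "j = i" | "j > i" by linarith
      then show "Poly_Mapping.lookup \<gamma> j = Poly_Mapping.lookup \<alpha> j"
      proof cases
        case 1 then show ?thesis using Suc.prems by blast
      next
        case 2 then show ?thesis using Suc.prems(4) z True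
          by (cases "i = Suc m") (auto simp: z)
      next
        case 3 then show ?thesis using Suc.prems(5) z True by auto
      qed
    qed
    then show ?thesis using Suc.prems by simp
  next
    case False
    then have im: "i < Suc m" by simp
    define c where "c = Poly_Mapping.lookup \<alpha> (Suc m)"
    define \<alpha>' where "\<alpha>' = \<alpha> - Poly_Mapping.single (Suc m) c + Poly_Mapping.single i c"
    have l': "Poly_Mapping.lookup \<alpha>' j = (if j = Suc m then 0 else if j = i then Poly_Mapping.lookup \<alpha> j + c
        else Poly_Mapping.lookup \<alpha> j)" for j
      using im by (simp add: \<alpha>'_def c_def lookup_add lookup_minus lookup_single when_def)
    have m': "monom 1 \<alpha>' \<in> I" unfolding \<alpha>'_def
      by (rule borel_move[OF B Suc.prems(1) im]) (simp add: c_def)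
    have k': "Poly_Mapping.keys \<alpha>' \<subseteq> {..m}"
    proof
      fix j assume "j \<in> Poly_Mapping.keys \<alpha>'"
      then have "Poly_Mapping.lookup \<alpha>' j \<noteq> 0" by (simp add: in_keys_iff)
      moreover have "j \<le> Suc m" if "Poly_Mapping.lookup \<alpha> j \<noteq> 0"
      proof -
        have "j \<in> Poly_Mapping.keys \<alpha>" using that by (simp add: in_keys_iff)
        then show ?thesis using Suc.prems(2) by auto
      qed
      ultimately show "j \<in> {..m}" using im by (auto simp: l' split: if_splits)
    qed
    have s1: "(\<Sum>l\<in>{i..Suc m}. Poly_Mapping.lookup \<alpha> l) = (\<Sum>l\<in>{i..m}. Poly_Mapping.lookup \<alpha> l) + c"
      using im by (simp add: c_def)
    have s2: "(\<Sum>l\<in>{i..m}. Poly_Mapping.lookup \<alpha>' l) = (\<Sum>l\<in>{i..m}. Poly_Mapping.lookup \<alpha> l + (if l = i then c else 0))"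
      by (rule sum.cong) (auto simp: l')
    have s3: "(\<Sum>l\<in>{i..m}. Poly_Mapping.lookup \<alpha> l + (if l = i then c else 0)) = (\<Sum>l\<in>{i..m}. Poly_Mapping.lookup \<alpha> l) + c"
      using im by (simp add: sum.distrib)
    show ?thesis
    proof (rule Suc.IH[OF m' k'])
      show "\<forall>j<i. Poly_Mapping.lookup \<gamma> j = Poly_Mapping.lookup \<alpha>' j"
        using Suc.prems(3) im by (auto simp: l')
      show "Poly_Mapping.lookup \<gamma> i = (\<Sum>l\<in>{i..m}. Poly_Mapping.lookup \<alpha>' l)"
        using Suc.prems(4) s1 s2 s3 by simp
      show "\<forall>j>i. Poly_Mapping.lookup \<gamma> j = 0" by (rule Suc.prems(5))
    qed
  qed
qed


section \<open>Upper bound for the Hilbert function\<close>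

lemma mdeg_upto: "Poly_Mapping.keys (\<alpha>::nat \<Rightarrow>\<^sub>0 nat) \<subseteq> {..n} \<Longrightarrow> mdeg \<alpha> = (\<Sum>j\<le>n. Poly_Mapping.lookup \<alpha> j)"
  by (rule mdeg_superset) auto

lemma lookup_beyond: "Poly_Mapping.keys (\<alpha>::nat \<Rightarrow>\<^sub>0 nat) \<subseteq> {..n} \<Longrightarrow> n < j \<Longrightarrow> Poly_Mapping.lookup \<alpha> j = 0"
proof -
  assume "Poly_Mapping.keys \<alpha> \<subseteq> {..n}" "n < j"
  then have "j \<notin> Poly_Mapping.keys \<alpha>" by (meson atMost_iff leD subsetD)
  then show ?thesis by (simp add: in_keys_iff)
qed

lemma card_H:
  assumes n2: "2 \<le> n"
  shows "card {\<gamma> \<in> Mons n t. Poly_Mapping.lookup \<gamma> 0 < D \<and> Poly_Mapping.lookup \<gamma> 1 < D} \<le> D * D * (t+1)^(n-2)"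
proof -
  let ?H = "{\<gamma> \<in> Mons n t. Poly_Mapping.lookup \<gamma> 0 < D \<and> Poly_Mapping.lookup \<gamma> 1 < D}"
  let ?B = "\<lambda>j::nat. if j < 2 then {..<D} else {..t}"
  let ?f = "\<lambda>\<gamma>. restrict (Poly_Mapping.lookup \<gamma>) {..<n}"
  have inj: "inj_on ?f ?H"
  proof (rule inj_onI)
    fix \<gamma> \<gamma>' assume g: "\<gamma> \<in> ?H" "\<gamma>' \<in> ?H" and e: "?f \<gamma> = ?f \<gamma>'"
    have lt: "Poly_Mapping.lookup \<gamma> j = Poly_Mapping.lookup \<gamma>' j" if "j < n" for j
    proof -
      have "?f \<gamma> j = ?f \<gamma>' j" using e by simp
      then show ?thesis using that by simp
    qed
    have kk: "Poly_Mapping.keys \<gamma> \<subseteq> {..n}" "Poly_Mapping.keys \<gamma>' \<subseteq> {..n}" "mdeg \<gamma> = t" "mdeg \<gamma>' = t"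
      using g by (auto simp: Mons_def)
    have "(\<Sum>j<n. Poly_Mapping.lookup \<gamma> j) + Poly_Mapping.lookup \<gamma> n
        = (\<Sum>j<n. Poly_Mapping.lookup \<gamma>' j) + Poly_Mapping.lookup \<gamma>' n"
      using mdeg_upto[OF kk(1)] mdeg_upto[OF kk(2)] kk(3,4)
      by (simp add: lessThan_Suc_atMost[symmetric])
    moreover have "(\<Sum>j<n. Poly_Mapping.lookup \<gamma> j) = (\<Sum>j<n. Poly_Mapping.lookup \<gamma>' j)"
      using lt by simp
    ultimately have ln: "Poly_Mapping.lookup \<gamma> n = Poly_Mapping.lookup \<gamma>' n" by simp
    show "\<gamma> = \<gamma>'"
    proof (rule poly_mapping_eqI)
      fix j
      consider "j < n" | "j = n" | "n < j" by linarith
      then show "Poly_Mapping.lookup \<gamma> j = Poly_Mapping.lookup \<gamma>' j"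
        by cases (use lt ln lookup_beyond[OF kk(1)] lookup_beyond[OF kk(2)] in auto)
    qed
  qed
  have sub: "?f ` ?H \<subseteq> PiE {..<n} ?B"
  proof
    fix x assume "x \<in> ?f ` ?H"
    then obtain \<gamma> where g: "\<gamma> \<in> ?H" "x = ?f \<gamma>" by blast
    have "Poly_Mapping.lookup \<gamma> j \<le> t" for j using g lookup_le_mdeg[of \<gamma> j] by (auto simp: Mons_def)
    moreover have "Poly_Mapping.lookup \<gamma> j < D" if "j < 2" for j
      using g that by (cases j) (auto simp: numeral_2_eq_2 less_Suc_eq)
    ultimately show "x \<in> PiE {..<n} ?B" using g by (auto simp: PiE_def Pi_def)
  qed
  have prod: "(\<Prod>j<m. card (?B j)) = D * D * (t+1)^(m-2)" if "2 \<le> m" for m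
    using that
  proof (induction m rule: nat_induct_at_least)
    case base
    then show ?case by (simp add: numeral_2_eq_2)
  next
    case (Suc m)
    have e: "Suc m - 2 = Suc (m - 2)" using Suc by simp
    have "(\<Prod>j<Suc m. card (?B j)) = (\<Prod>j<m. card (?B j)) * card (?B m)" by simp
    also have "\<dots> = D * D * (t+1)^(m-2) * (t+1)" using Suc by simp
    finally show ?case unfolding e by (simp add: algebra_simps)
  qed
  have "card ?H = card (?f ` ?H)" by (rule card_image[OF inj, symmetric])
  also have "\<dots> \<le> card (PiE {..<n} ?B)"
    by (rule card_mono[OF _ sub]) (simp add: finite_PiE)
  also have "\<dots> = (\<Prod>j<n. card (?B j))" by (simp add: card_PiE)
  also have "\<dots> = D * D * (t+1)^(n-2)" by (rule prod[OF n2])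
  finally show ?thesis .
qed

lemma hf_upper:
  fixes I :: "'k::field mpoly set"
  assumes B: "borel_fixed n I" and a: "monom 1 \<alpha> \<in> I" and k: "Poly_Mapping.keys \<alpha> \<subseteq> {..n}"
    and n2: "2 \<le> n" and t: "mdeg \<alpha> \<le> t"
  shows "hilbert_fn n I t \<le> card (Mons n t) - card (Mons n (t - Poly_Mapping.lookup \<alpha> 0))
      + mdeg \<alpha> * mdeg \<alpha> * (t+1)^(n-2)"
proof -
  define D where "D = mdeg \<alpha>"
  define a0 where "a0 = Poly_Mapping.lookup \<alpha> 0"
  have MI: "monomial_ideal n I" using B by (simp add: borel_fixed_def)
  have ideal: "is_ideal n I" using MI by (simp add: monomial_ideal_def)
  have a0D: "a0 \<le> D" unfolding a0_def D_def by (rule lookup_le_mdeg)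
  have sD: "D = a0 + (\<Sum>l\<in>{1..n}. Poly_Mapping.lookup \<alpha> l)"
  proof -
    have "D = (\<Sum>l\<in>{0..n}. Poly_Mapping.lookup \<alpha> l)" unfolding D_def
      using mdeg_upto[OF k] by (simp add: atLeast0AtMost)
    also have "\<dots> = a0 + (\<Sum>l\<in>{Suc 0..n}. Poly_Mapping.lookup \<alpha> l)"
      by (simp add: sum.atLeast_Suc_atMost a0_def)
    finally show ?thesis by simp
  qed
  have g0: "monom 1 (Poly_Mapping.single 0 D) \<in> I"
  proof (rule borel_collect[OF B a k, where i = 0])
    show "Poly_Mapping.lookup (Poly_Mapping.single (0::nat) D) 0 = (\<Sum>l\<in>{0..n}. Poly_Mapping.lookup \<alpha> l)"
      using mdeg_upto[OF k] by (simp add: D_def atLeast0AtMost)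
  qed (auto simp: lookup_single)
  have g1: "monom 1 (Poly_Mapping.single 0 a0 + Poly_Mapping.single 1 (D - a0)) \<in> I"
  proof (rule borel_collect[OF B a k, where i = 1])
    show "Poly_Mapping.lookup (Poly_Mapping.single (0::nat) a0 + Poly_Mapping.single 1 (D - a0)) 1
        = (\<Sum>l\<in>{1..n}. Poly_Mapping.lookup \<alpha> l)"
      using sD by (simp add: lookup_add lookup_single when_def)
  qed (auto simp: lookup_add lookup_single a0_def when_def)
  let ?L = "{\<gamma> \<in> Mons n t. Poly_Mapping.lookup \<gamma> 0 < a0}"
  let ?H = "{\<gamma> \<in> Mons n t. Poly_Mapping.lookup \<gamma> 0 < D \<and> Poly_Mapping.lookup \<gamma> 1 < D}"
  have sub: "Mons n t - MI n I t \<subseteq> ?L \<union> ?H"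
  proof
    fix \<gamma> assume g: "\<gamma> \<in> Mons n t - MI n I t"
    then have gM: "\<gamma> \<in> Mons n t" and gk: "Poly_Mapping.keys \<gamma> \<subseteq> {..n}" and gn: "monom 1 \<gamma> \<notin> I"
      by (auto simp: MI_def Mons_def)
    show "\<gamma> \<in> ?L \<union> ?H"
    proof (rule ccontr)
      assume "\<gamma> \<notin> ?L \<union> ?H"
      then have c1: "a0 \<le> Poly_Mapping.lookup \<gamma> 0" and
        c2: "D \<le> Poly_Mapping.lookup \<gamma> 0 \<or> D \<le> Poly_Mapping.lookup \<gamma> 1" using gM by auto
      from c2 show False
      proof
        assume "D \<le> Poly_Mapping.lookup \<gamma> 0"
        then have "ple (Poly_Mapping.single 0 D) \<gamma>" by (simp add: ple_def lookup_single when_def)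
        from mon_ple_in_ideal[OF ideal g0 this gk] gn show False by simp
      next
        assume "D \<le> Poly_Mapping.lookup \<gamma> 1"
        then have "ple (Poly_Mapping.single 0 a0 + Poly_Mapping.single 1 (D - a0)) \<gamma>"
          using c1 by (simp add: ple_def lookup_single lookup_add when_def)
        from mon_ple_in_ideal[OF ideal g1 this gk] gn show False by simp
      qed
    qed
  qed
  have "hilbert_fn n I t = card (Mons n t) - card (MI n I t)" by (rule hilbert_fn_monomial[OF MI])
  also have "\<dots> = card (Mons n t - MI n I t)"
    by (rule card_Diff_subset[symmetric]) (auto intro: finite_subset[OF MI_subset] simp: MI_subset)
  also have "\<dots> \<le> card (?L \<union> ?H)" by (rule card_mono[OF _ sub]) simp
  also have "\<dots> \<le> card ?L + card ?H" by (rule card_Un_le)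
  also have "card ?L = card (Mons n t) - card (Mons n (t - a0))"
    by (rule card_low) (use a0D t D_def in simp)
  also have "card ?H \<le> D * D * (t+1)^(n-2)" by (rule card_H[OF n2])
  finally show ?thesis by (simp add: D_def a0_def)
qed


section \<open>The Macaulay polynomial\<close>

lemma coefQ_Cons: "coefQ (x # is) (a # as) j = (if x = j then a else 0) + coefQ is as j"
proof -
  have "coefQ (x # is) (a # as) j = (if x = j then a else 0) + (\<Sum>k<length is. if (x # is) ! Suc k = j then (a # as) ! Suc k else 0)"
    unfolding coefQ_def length_Cons by (subst sum.lessThan_Suc_shift) simp
  also have "(\<Sum>k<length is. if (x # is) ! Suc k = j then (a # as) ! Suc k else 0) = coefQ is as j"
    unfolding coefQ_def nth_Cons_Suc ..
  finally show ?thesis .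
qed

lemma set_le_hd:
  fixes "is" :: "nat list"
  assumes "sorted_wrt (>) is" "is \<noteq> []" "x \<in> set is"
  shows "x \<le> hd is"
proof (cases "is")
  case (Cons h r)
  then show ?thesis using assms by auto
qed (use assms in simp)

lemma coefQ_beyond:
  fixes "is" :: "nat list"
  assumes "sorted_wrt (>) is" "is \<noteq> []" "hd is < j"
  shows "coefQ is as j = 0"
  unfolding coefQ_def
proof (rule sum.neutral, intro ballI)
  fix k assume "k \<in> {..<length is}"
  then have "is ! k \<in> set is" by simp
  then have "is ! k \<le> hd is" using set_le_hd[OF assms(1,2)] by blast
  then show "(if is ! k = j then as ! k else 0) = 0" using assms(3) by auto
qed

lemma mQ_beyond:
  assumes "hd is < i"
  shows "mQ is as i = 0"
  using assms by (simp add: mQ_def)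

lemma mQ_Cons:
  assumes s: "sorted_wrt (>) is" and ne: "is \<noteq> []" and lt: "hd is < N" and i: "i \<le> N"
  shows "mQ (N # is) (A # as) i = A + mQ is as i"
proof -
  have "mQ (N # is) (A # as) i = (\<Sum>j\<in>{i..N}. (if N = j then A else 0) + coefQ is as j)"
    by (simp add: mQ_def coefQ_Cons)
  also have "\<dots> = A + (\<Sum>j\<in>{i..N}. coefQ is as j)"
    using i by (simp add: sum.distrib)
  also have "(\<Sum>j\<in>{i..N}. coefQ is as j) = (\<Sum>j\<in>{i..hd is}. coefQ is as j)"
  proof (rule sum.mono_neutral_right)
    show "{i..hd is} \<subseteq> {i..N}" using lt by auto
    show "\<forall>j\<in>{i..N} - {i..hd is}. coefQ is as j = 0"
      using coefQ_beyond[OF s ne] by auto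
  qed simp
  finally show ?thesis by (simp add: mQ_def)
qed

lemma hockey_real:
  fixes x :: real
  shows "(\<Sum>i=0..k. (x + real i) gchoose (i+1)) = ((x + real k + 1) gchoose (k+1)) - 1"
proof (induction k)
  case 0
  then show ?case by simp
next
  case (Suc k)
  define a where "a = x + real k + 1"
  have a1: "x + real (Suc k) = a" by (simp add: a_def)
  have a2: "x + real (Suc k) + 1 = a + 1" by (simp add: a_def)
  have "(\<Sum>i=0..Suc k. (x + real i) gchoose (i+1))
      = (\<Sum>i=0..k. (x + real i) gchoose (i+1)) + ((x + real (Suc k)) gchoose (Suc k + 1))"
    by simp
  also have "\<dots> = (a gchoose (Suc k)) - 1 + (a gchoose (Suc (Suc k)))"
    unfolding Suc a1 by (simp add: a_def)
  also have "\<dots> = ((a + 1) gchoose (Suc (Suc k))) - 1"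
    using gbinomial_Suc_Suc[of a "Suc k"] by simp
  finally show ?case unfolding a2 by simp
qed

lemma Qpoly_Cons:
  assumes data: "macaulay_data is as" and ne: "is \<noteq> []" and top: "hd is + 2 \<le> n"
    and tA: "A \<le> t"
  shows "Qpoly ((n - 1) # is) (A # as) t =
     ((real t + real n) gchoose n) - ((real (t - A) + real n) gchoose n) + Qpoly is as (t - A)"
proof -
  have s: "sorted_wrt (>) is" using data by (simp add: macaulay_data_def)
  define h where "h = hd is"
  define g where "g = (\<lambda>(x::real) i. x gchoose (i + 1))"
  define u where "u = real (t - A)"
  have u: "u = real t - real A" using tA by (simp add: u_def)
  have n1: "Suc (n - 1) = n" using top by simp
  have mq: "mQ ((n - Suc 0) # is) (A # as) i = A + mQ is as i" if "i \<le> n - Suc 0" for i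
    by (rule mQ_Cons[OF s ne _ that]) (use top in simp)
  have "Qpoly ((n - 1) # is) (A # as) t
      = (\<Sum>i=0..n-1. g (real t + real i) i - g (real t + real i - real (A + mQ is as i)) i)"
    unfolding Qpoly_def g_def by (intro sum.cong) (simp_all add: mq)
  also have "\<dots> = (\<Sum>i=0..n-1. g (real t + real i) i - g (u + real i) i)
       + (\<Sum>i=0..n-1. g (u + real i) i - g (u + real i - real (mQ is as i)) i)"
    by (simp add: sum.distrib[symmetric] u algebra_simps)
  also have "(\<Sum>i=0..n-1. g (real t + real i) i - g (u + real i) i)
      = ((real t + real n) gchoose n) - ((u + real n) gchoose n)"
    using hockey_real[of "real t" "n-1"] hockey_real[of u "n-1"] top
    by (simp add: g_def sum_subtractf n1 add.assoc)
  also have "(\<Sum>i=0..n-1. g (u + real i) i - g (u + real i - real (mQ is as i)) i)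
      = (\<Sum>i=0..h. g (u + real i) i - g (u + real i - real (mQ is as i)) i)"
  proof (rule sum.mono_neutral_right)
    show "{0..h} \<subseteq> {0..n-1}" using top by (auto simp: h_def)
    show "\<forall>i\<in>{0..n - 1} - {0..h}. g (u + real i) i - g (u + real i - real (mQ is as i)) i = 0"
      by (auto simp: mQ_beyond h_def)
  qed simp
  also have "\<dots> = Qpoly is as (t - A)"
    by (simp add: Qpoly_def g_def h_def u_def)
  finally show ?thesis by (simp add: u_def)
qed


section \<open>Growth estimates\<close>

lemma gbin_abs_bound: "\<bar>(y::real) gchoose k\<bar> \<le> (\<bar>y\<bar> + real k) ^ k"
proof -
  have "\<bar>y gchoose k\<bar> \<le> \<bar>y gchoose k\<bar> * fact k"
    by (simp add: mult_le_cancel_left1)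
  also have "\<dots> = \<bar>(y gchoose k) * fact k\<bar>" by (simp add: abs_mult)
  also have "\<dots> = \<bar>\<Prod>i = 0..<k. y - real i\<bar>" by (simp add: gbinomial_mult_fact')
  also have "\<dots> = (\<Prod>i = 0..<k. \<bar>y - real i\<bar>)" by (simp add: abs_prod)
  also have "\<dots> \<le> (\<Prod>i = 0..<k. \<bar>y\<bar> + real k)"
    by (intro prod_mono) auto
  also have "\<dots> = (\<bar>y\<bar> + real k) ^ k" by simp
  finally show ?thesis .
qed

lemma gbin_tele:
  "((x::real) gchoose Suc k) - ((x - real m) gchoose Suc k) = (\<Sum>j<m. (x - real j - 1) gchoose k)"
proof (induction m)
  case 0
  then show ?case by simp
next
  case (Suc m)
  have p: "(x - real m) gchoose Suc k = ((x - real m - 1) gchoose k) + ((x - real (Suc m)) gchoose Suc k)"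
    using gbinomial_Suc_Suc[of "x - real m - 1" k] by (simp add: algebra_simps)
  show ?case using Suc p by simp
qed

lemma term_bound:
  fixes s :: real
  assumes s: "0 \<le> s"
  shows "\<bar>((s + real i) gchoose Suc i) - ((s + real i - real m) gchoose Suc i)\<bar>
     \<le> real m * (real (2*i+m+1)) ^ i * (s + 1) ^ i"
proof -
  have "\<bar>((s + real i) gchoose Suc i) - ((s + real i - real m) gchoose Suc i)\<bar>
      = \<bar>\<Sum>j<m. (s + real i - real j - 1) gchoose i\<bar>" by (simp add: gbin_tele)
  also have "\<dots> \<le> (\<Sum>j<m. \<bar>(s + real i - real j - 1) gchoose i\<bar>)" by (rule sum_abs)
  also have "\<dots> \<le> (\<Sum>j<m. (real (2*i+m+1)) ^ i * (s + 1) ^ i)"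
  proof (rule sum_mono)
    fix j assume j: "j \<in> {..<m}"
    have "\<bar>s + real i - real j - 1\<bar> + real i \<le> s + real (2*i+m)"
      using j s by (auto simp: abs_if)
    also have "\<dots> \<le> real (2*i+m+1) * (s + 1)"
      using s by (simp add: algebra_simps)
    finally have b: "\<bar>s + real i - real j - 1\<bar> + real i \<le> real (2*i+m+1) * (s + 1)" .
    have "\<bar>(s + real i - real j - 1) gchoose i\<bar> \<le> (\<bar>s + real i - real j - 1\<bar> + real i) ^ i"
      by (rule gbin_abs_bound)
    also have "\<dots> \<le> (real (2*i+m+1) * (s + 1)) ^ i"
      by (rule power_mono[OF b]) simp
    finally show "\<bar>(s + real i - real j - 1) gchoose i\<bar> \<le> (real (2*i+m+1)) ^ i * (s + 1) ^ i"
      by (simp add: power_mult_distrib)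
  qed
  also have "\<dots> = real m * (real (2*i+m+1)) ^ i * (s + 1) ^ i" by simp
  finally show ?thesis .
qed

lemma Qpoly_bound:
  "\<exists>K\<ge>0. \<forall>s::nat. \<bar>Qpoly is as s\<bar> \<le> K * (real s + 1) ^ (hd is)"
proof -
  define h where "h = hd is"
  define K where "K = (\<Sum>i=0..h. real (mQ is as i) * (real (2*i+mQ is as i+1)) ^ i)"
  have K0: "0 \<le> K" unfolding K_def by (intro sum_nonneg) simp
  have "\<bar>Qpoly is as s\<bar> \<le> K * (real s + 1) ^ h" for s :: nat
  proof -
    have "\<bar>Qpoly is as s\<bar> \<le> (\<Sum>i=0..h. \<bar>((real s + real i) gchoose Suc i) - ((real s + real i - real (mQ is as i)) gchoose Suc i)\<bar>)"
      unfolding Qpoly_def h_def by (simp add: sum_abs)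
    also have "\<dots> \<le> (\<Sum>i=0..h. real (mQ is as i) * (real (2*i+mQ is as i+1)) ^ i * (real s + 1) ^ h)"
    proof (rule sum_mono)
      fix i assume i: "i \<in> {0..h}"
      have "(real s + 1) ^ i \<le> (real s + 1) ^ h" using i by (intro power_increasing) auto
      then have "real (mQ is as i) * (real (2*i+mQ is as i+1)) ^ i * (real s + 1) ^ i
          \<le> real (mQ is as i) * (real (2*i+mQ is as i+1)) ^ i * (real s + 1) ^ h"
        by (intro mult_left_mono) auto
      with term_bound[of "real s" i "mQ is as i"]
      show "\<bar>((real s + real i) gchoose Suc i) - ((real s + real i - real (mQ is as i)) gchoose Suc i)\<bar>
          \<le> real (mQ is as i) * (real (2*i+mQ is as i+1)) ^ i * (real s + 1) ^ h" by simp
    qed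
    also have "\<dots> = K * (real s + 1) ^ h" unfolding K_def by (simp add: sum_distrib_right)
    finally show ?thesis .
  qed
  then show ?thesis using K0 unfolding h_def by blast
qed

lemma growth_contra:
  fixes K :: real
  assumes k: "1 \<le> k"
    and H: "\<And>t. T \<le> t \<Longrightarrow> real ((t - A + k + 1) choose k) \<le> K * (real t + 1) ^ (k - 1)"
  shows False
proof -
  define c where "c = (2 * real k) ^ k"
  have c0: "0 < c" using k by (simp add: c_def)
  define t where "t = max T (2*A) + nat \<lceil>K * c\<rceil>"
  have tT: "T \<le> t" and tA: "2 * A \<le> t" by (auto simp: t_def)
  have tK: "K * c < real t + 1"
  proof -
    have "K * c \<le> real (nat \<lceil>K * c\<rceil>)" by linarith
    also have "\<dots> \<le> real t" by (simp add: t_def)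
    finally show ?thesis by simp
  qed
  define m where "m = t - A + k + 1"
  have mk: "k \<le> m" by (simp add: m_def)
  have mt: "(real t + 1) / 2 \<le> real m" using tA by (simp add: m_def)
  have kpos: "0 < real k" using k by simp
  have "(real t + 1) / (2 * real k) = ((real t + 1) / 2) / real k" by simp
  also have "\<dots> \<le> real m / real k" by (rule divide_right_mono[OF mt]) (use kpos in simp)
  finally have "((real t + 1) / (2 * real k)) \<le> real m / real k" .
  then have "((real t + 1) / (2 * real k)) ^ k \<le> (real m / real k) ^ k"
    by (rule power_mono) simp
  also have "\<dots> \<le> real (m choose k)" by (rule binomial_ge_n_over_k_pow_k[OF mk])
  also have "\<dots> \<le> K * (real t + 1) ^ (k - 1)" using H[OF tT] by (simp add: m_def)
  finally have i1: "((real t + 1) / (2 * real k)) ^ k \<le> K * (real t + 1) ^ (k - 1)" .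
  have "((real t + 1) / (2 * real k)) ^ k = (real t + 1) ^ k / c"
    by (simp add: c_def power_divide)
  also have "(real t + 1) ^ k = (real t + 1) * (real t + 1) ^ (k - 1)"
    using k by (metis Suc_diff_le diff_Suc_1 power_Suc)
  finally have "(real t + 1) * (real t + 1) ^ (k - 1) / c \<le> K * (real t + 1) ^ (k - 1)"
    using i1 by simp
  then have "(real t + 1) * (real t + 1) ^ (k - 1) \<le> (K * c) * (real t + 1) ^ (k - 1)"
    using c0 by (simp add: field_simps)
  moreover have "0 < (real t + 1) ^ (k - 1)" by simp
  ultimately have "real t + 1 \<le> K * c" by simp
  with tK show False by simp
qed


lemma mon_in_Spoly_keys:
  assumes "monom (1::'k::comm_ring_1) \<alpha> \<in> Spoly n"
  shows "Poly_Mapping.keys \<alpha> \<subseteq> {..n}"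
  using assms by (simp add: Spoly_def keys_monom)

lemma in_keys_mon: "\<alpha> \<in> Poly_Mapping.keys (monom (1::'k::comm_ring_1) \<alpha>)"
  by (simp add: keys_monom)

lemma ideal_Spoly: "is_ideal n I \<Longrightarrow> p \<in> I \<Longrightarrow> p \<in> Spoly n"
  by (auto simp: is_ideal_def)

lemma real_card_Mons: "real (card (Mons n s)) = (real s + real n) gchoose n"
  by (simp add: card_Mons binomial_gbinomial)

lemma borel_of_product:
  fixes I J :: "'k::comm_ring_1 mpoly set"
  assumes I: "is_ideal n I" and J: "borel_fixed n J"
    and eq: "I = {monom 1 (Poly_Mapping.single 0 A) * g | g. g \<in> J}"
  shows "borel_fixed n I"
proof -
  define e where "e = Poly_Mapping.single (0::nat) A"
  have JM: "monomial_ideal n J" using J by (simp add: borel_fixed_def)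
  have mono: "monom 1 \<alpha> \<in> J" if "g \<in> J" "\<alpha> \<in> Poly_Mapping.keys g" for g \<alpha>
    using JM that by (simp add: monomial_ideal_def)
  have key: "\<exists>\<beta>. \<alpha> = e + \<beta> \<and> monom 1 \<beta> \<in> J" if "p \<in> I" "\<alpha> \<in> Poly_Mapping.keys p" for p \<alpha>
  proof -
    from that(1) eq obtain g where g: "p = monom 1 e * g" "g \<in> J" by (auto simp: e_def)
    with that(2) keys_monom1_mult[of e g] obtain \<beta> where "\<alpha> = e + \<beta>" "\<beta> \<in> Poly_Mapping.keys g" by auto
    with mono[OF g(2)] show ?thesis by blast
  qed
  have inI: "monom 1 (e + \<beta>) \<in> I" if "monom 1 \<beta> \<in> J" for \<beta>
  proof -
    have "monom 1 e * monom 1 \<beta> \<in> I" using that eq by (auto simp: e_def)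
    then show ?thesis by (simp add: monom_mult)
  qed
  have "monomial_ideal n I"
    unfolding monomial_ideal_def
  proof (intro conjI I ballI)
    fix p \<alpha> assume "p \<in> I" "\<alpha> \<in> Poly_Mapping.keys p"
    from key[OF this] inI show "monom 1 \<alpha> \<in> I" by blast
  qed
  moreover have "monom 1 (\<alpha> - Poly_Mapping.single j 1 + Poly_Mapping.single i 1) \<in> I"
    if a: "monom 1 \<alpha> \<in> I" and ij: "i < j" and pos: "0 < Poly_Mapping.lookup \<alpha> j" for \<alpha> i j
  proof -
    from key[OF a in_keys_mon] obtain \<beta> where b: "\<alpha> = e + \<beta>" "monom 1 \<beta> \<in> J" by blast
    have "0 < Poly_Mapping.lookup \<beta> j" using pos ij b(1) by (simp add: e_def lookup_add lookup_single)
    then have "monom 1 (\<beta> - Poly_Mapping.single j 1 + Poly_Mapping.single i 1) \<in> J"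
      using J b(2) ij unfolding borel_fixed_def by blast
    from inI[OF this] have "monom 1 (e + (\<beta> - Poly_Mapping.single j 1 + Poly_Mapping.single i 1)) \<in> I" .
    moreover have "e + (\<beta> - Poly_Mapping.single j 1 + Poly_Mapping.single i 1)
        = \<alpha> - Poly_Mapping.single j 1 + Poly_Mapping.single i 1"
      using ij b(1) by (intro poly_mapping_eqI) (simp add: e_def lookup_add lookup_minus lookup_single when_def)
    ultimately show ?thesis by simp
  qed
  ultimately show ?thesis unfolding borel_fixed_def by blast
qed

lemma borel_divisible:
  fixes I :: "'k::field mpoly set"
  assumes data: "macaulay_data is as" and ne: "is \<noteq> []" and top: "hd is + 2 \<le> n"
    and B: "borel_fixed n I"
    and hp: "has_hilbert_poly n I (Qpoly ((n - 1) # is) (A # as))"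
    and a: "monom 1 \<alpha> \<in> I"
  shows "A \<le> Poly_Mapping.lookup \<alpha> 0"
proof (rule ccontr)
  assume "\<not> A \<le> Poly_Mapping.lookup \<alpha> 0"
  then have aA: "Poly_Mapping.lookup \<alpha> 0 < A" by simp
  define a0 where "a0 = Poly_Mapping.lookup \<alpha> 0"
  define D where "D = mdeg \<alpha>"
  define N where "N = (\<lambda>s. card (Mons n s))"
  have MI: "monomial_ideal n I" using B by (simp add: borel_fixed_def)
  have ideal: "is_ideal n I" using MI by (simp add: monomial_ideal_def)
  have k: "Poly_Mapping.keys \<alpha> \<subseteq> {..n}"
    by (rule mon_in_Spoly_keys) (rule ideal_Spoly[OF ideal a])
  have n2: "2 \<le> n" using top by simp
  from hp obtain t0 where t0: "\<And>t. t0 \<le> t \<Longrightarrow> real (hilbert_fn n I t) = Qpoly ((n - 1) # is) (A # as) t"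
    by (auto simp: has_hilbert_poly_def)
  from Qpoly_bound[of "is" as] obtain K where K: "0 \<le> K" "\<And>s. \<bar>Qpoly is as s\<bar> \<le> K * (real s + 1) ^ (hd is)"
    by blast
  define T where "T = max t0 (max D A)"
  show False
  proof (rule growth_contra[of "n - 1" T A "real (D * D) + K"])
    show "1 \<le> n - 1" using n2 by simp
  next
    fix t assume tT: "T \<le> t"
    then have tt0: "t0 \<le> t" and tD: "D \<le> t" and tA: "A \<le> t" by (auto simp: T_def)
    have up: "hilbert_fn n I t \<le> N t - N (t - a0) + D * D * (t+1)^(n-2)"
      using hf_upper[OF B a k n2] tD by (simp add: D_def a0_def N_def)
    have mono1: "N (t - a0) \<le> N t" unfolding N_def card_Mons by (rule binomial_right_mono) simp
    have eqQ: "real (hilbert_fn n I t) = real (N t) - real (N (t - A)) + Qpoly is as (t - A)"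
      using t0[OF tt0] Qpoly_Cons[OF data ne top tA] by (simp add: N_def real_card_Mons)
    have "real (hilbert_fn n I t) \<le> real (N t - N (t - a0) + D * D * (t+1)^(n-2))"
      using up by (simp only: of_nat_le_iff)
    also have "\<dots> = real (N t) - real (N (t - a0)) + real (D * D) * (real t + 1)^(n-2)"
      using mono1 by (simp add: of_nat_diff add.commute)
    finally have "real (hilbert_fn n I t) \<le> real (N t) - real (N (t - a0)) + real (D * D) * (real t + 1)^(n-2)" .
    with eqQ have i1: "real (N (t - a0)) - real (N (t - A)) \<le> real (D * D) * (real t + 1)^(n-2) - Qpoly is as (t - A)"
      by simp
    have "- Qpoly is as (t - A) \<le> K * (real (t - A) + 1) ^ (hd is)" using K(2)[of "t - A"] by simp
    also have "\<dots> \<le> K * (real t + 1) ^ (n - 2)"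
    proof (rule mult_left_mono[OF _ K(1)])
      have "(real (t - A) + 1) ^ (hd is) \<le> (real t + 1) ^ (hd is)"
        by (rule power_mono) (use tA in auto)
      also have "\<dots> \<le> (real t + 1) ^ (n - 2)" by (rule power_increasing) (use top in auto)
      finally show "(real (t - A) + 1) ^ (hd is) \<le> (real t + 1) ^ (n - 2)" .
    qed
    finally have i2: "real (N (t - a0)) - real (N (t - A)) \<le> (real (D * D) + K) * (real t + 1)^(n-2)"
      using i1 by (simp add: algebra_simps)
    have "N (Suc (t - A)) \<le> N (t - a0)" unfolding N_def card_Mons
      by (rule binomial_right_mono) (use aA tA a0_def in simp)
    moreover have "N (Suc (t - A)) = N (t - A) + ((t - A + n - 1 + 1) choose (n - 1))"
    proof -
      have "N (Suc (t - A)) = (Suc (t - A + n)) choose (Suc (n - 1))"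
        unfolding N_def card_Mons using n2 by simp
      also have "\<dots> = ((t - A + n) choose (n - 1)) + ((t - A + n) choose (Suc (n - 1)))"
        by (rule binomial_Suc_Suc)
      also have "((t - A + n) choose (Suc (n - 1))) = N (t - A)"
        unfolding N_def card_Mons using n2 by simp
      finally show ?thesis using n2 by (simp add: add.commute)
    qed
    ultimately have "real ((t - A + n - 1 + 1) choose (n - 1)) \<le> real (N (t - a0)) - real (N (t - A))"
      by simp
    with i2 show "real ((t - A + (n - 1) + 1) choose (n - 1)) \<le> (real (D * D) + K) * (real t + 1) ^ (n - 1 - 1)"
      using n2 by (simp add: numeral_2_eq_2 diff_diff_left)
  qed
qed


lemma quotient_ideal:
  fixes I :: "'k::field mpoly set"
  assumes data: "macaulay_data is as" and ne: "is \<noteq> []" and top: "hd is + 2 \<le> n"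
    and B: "borel_fixed n I" and sat: "saturated n I"
    and hp: "has_hilbert_poly n I (Qpoly ((n - 1) # is) (A # as))"
  shows "\<exists>J. is_ideal n J \<and> saturated n J \<and> borel_fixed n J \<and> has_hilbert_poly n J (Qpoly is as)
       \<and> I = {monom 1 (Poly_Mapping.single 0 A) * g | g. g \<in> J}"
proof -
  define e where "e = Poly_Mapping.single (0::nat) A"
  define X :: "'k mpoly" where "X = monom 1 e"
  define J where "J = {g \<in> Spoly n. X * g \<in> I}"
  have MIi: "monomial_ideal n I" using B by (simp add: borel_fixed_def)
  have ideal: "is_ideal n I" using MIi by (simp add: monomial_ideal_def)
  have div: "A \<le> Poly_Mapping.lookup \<alpha> 0" if "monom 1 \<alpha> \<in> I" for \<alpha>
    by (rule borel_divisible[OF data ne top B hp that])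
  have XS: "X \<in> Spoly n" unfolding X_def e_def by (rule monom_in_Spoly) simp
  have Xmon: "X * monom 1 \<beta> = monom 1 (e + \<beta>)" for \<beta> by (simp add: X_def monom_mult)
  have ple_e: "ple e \<alpha>" if "monom 1 \<alpha> \<in> I" for \<alpha>
    using div[OF that] by (simp add: ple_def e_def lookup_single when_def)
  have J_ideal: "is_ideal n J"
    unfolding is_ideal_def
  proof (intro conjI ballI)
    show "J \<subseteq> Spoly n" by (auto simp: J_def)
    show "0 \<in> J" using ideal by (simp add: J_def is_ideal_def)
  next
    fix p q :: "'k mpoly" assume "p \<in> J" "q \<in> J"
    then show "p + q \<in> J" using ideal by (auto simp: J_def is_ideal_def distrib_left intro: Spoly_add)
  next
    fix f p :: "'k mpoly" assume f: "f \<in> Spoly n" and p: "p \<in> J"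
    have eq: "X * (f * p) = f * (X * p)" by (simp add: mult.left_commute)
    have "f * (X * p) \<in> I" using p f ideal by (auto simp: J_def intro: ideal_mult)
    then have "X * (f * p) \<in> I" by (simp only: eq)
    moreover have "f * p \<in> Spoly n" using f p by (auto simp: J_def intro: Spoly_mult)
    ultimately show "f * p \<in> J" by (simp add: J_def)
  qed
  have I_eq: "I = {monom 1 (Poly_Mapping.single 0 A) * g | g. g \<in> J}"
  proof (intro set_eqI iffI)
    fix p assume p: "p \<in> I"
    define g where "g = (\<Sum>\<alpha>\<in>Poly_Mapping.keys p. monom (Poly_Mapping.lookup p \<alpha>) (\<alpha> - e))"
    have pS: "p \<in> Spoly n" by (rule ideal_Spoly[OF ideal p])
    have mk: "monom 1 \<alpha> \<in> I" if "\<alpha> \<in> Poly_Mapping.keys p" for \<alpha>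
      using MIi p that by (simp add: monomial_ideal_def)
    have "X * g = (\<Sum>\<alpha>\<in>Poly_Mapping.keys p. monom (Poly_Mapping.lookup p \<alpha>) (e + (\<alpha> - e)))"
      unfolding g_def X_def by (simp add: sum_distrib_left monom_mult)
    also have "\<dots> = (\<Sum>\<alpha>\<in>Poly_Mapping.keys p. monom (Poly_Mapping.lookup p \<alpha>) \<alpha>)"
      by (rule sum.cong) (simp_all add: pm_split[OF ple_e[OF mk]])
    also have "\<dots> = p" by (rule poly_expand[symmetric])
    finally have Xg: "X * g = p" .
    have gS: "g \<in> Spoly n" unfolding g_def
    proof (rule Spoly_sum)
      fix \<alpha> assume "\<alpha> \<in> Poly_Mapping.keys p"
      then have "Poly_Mapping.keys \<alpha> \<subseteq> {..n}" using pS by (auto simp: Spoly_def)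
      then show "monom (Poly_Mapping.lookup p \<alpha>) (\<alpha> - e) \<in> Spoly n"
        using keys_minus_sub[of \<alpha> e] by (intro monom_in_Spoly) blast
    qed simp
    have "g \<in> J" using gS Xg p by (simp add: J_def)
    then show "p \<in> {monom 1 (Poly_Mapping.single 0 A) * g | g. g \<in> J}"
      using Xg by (auto simp: X_def e_def)
  next
    fix p assume "p \<in> {monom 1 (Poly_Mapping.single 0 A) * g | g. g \<in> J}"
    then show "p \<in> I" by (auto simp: J_def X_def e_def)
  qed
  have J_sat: "saturated n J"
    unfolding saturated_def
  proof (intro ballI impI)
    fix f :: "'k mpoly" assume f: "f \<in> Spoly n"
      and "\<exists>N. \<forall>j\<le>n. monom 1 (Poly_Mapping.single j N) * f \<in> J"
    then obtain N where N: "\<And>j. j \<le> n \<Longrightarrow> monom 1 (Poly_Mapping.single j N) * f \<in> J" by blast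
    have "\<forall>j\<le>n. monom 1 (Poly_Mapping.single j N) * (X * f) \<in> I"
      using N by (auto simp: J_def mult.left_commute)
    moreover have "X * f \<in> Spoly n" by (rule Spoly_mult[OF XS f])
    ultimately have "X * f \<in> I" using sat unfolding saturated_def by blast
    then show "f \<in> J" using f by (simp add: J_def)
  qed
  have monJ: "monom 1 \<beta> \<in> J \<longleftrightarrow> Poly_Mapping.keys \<beta> \<subseteq> {..n} \<and> monom 1 (e + \<beta>) \<in> I" for \<beta>
  proof -
    have "monom (1::'k) \<beta> \<in> Spoly n \<longleftrightarrow> Poly_Mapping.keys \<beta> \<subseteq> {..n}"
      using monom_in_Spoly[of \<beta> n "1::'k"] mon_in_Spoly_keys[of \<beta> n] by blast
    then show ?thesis unfolding J_def using Xmon[of \<beta>] by simp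
  qed
  have J_mon: "monomial_ideal n J"
    unfolding monomial_ideal_def
  proof (intro conjI J_ideal ballI)
    fix g \<beta> assume g: "g \<in> J" and b: "\<beta> \<in> Poly_Mapping.keys g"
    have "e + \<beta> \<in> Poly_Mapping.keys (X * g)" using b by (simp add: X_def keys_monom1_mult)
    moreover have "X * g \<in> I" using g by (simp add: J_def)
    ultimately have "monom 1 (e + \<beta>) \<in> I" using MIi by (simp add: monomial_ideal_def)
    moreover have "Poly_Mapping.keys \<beta> \<subseteq> {..n}" using g b by (auto simp: J_def Spoly_def)
    ultimately show "monom 1 \<beta> \<in> J" using monJ by blast
  qed
  have J_borel: "borel_fixed n J"
    unfolding borel_fixed_def
  proof (intro conjI J_mon allI impI)
    fix \<beta> i j assume b: "monom 1 \<beta> \<in> J" and ij: "i < j" and pos: "0 < Poly_Mapping.lookup \<beta> j"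
    have kb: "Poly_Mapping.keys \<beta> \<subseteq> {..n}" and bI: "monom 1 (e + \<beta>) \<in> I" using b monJ by auto
    have "0 < Poly_Mapping.lookup (e + \<beta>) j" using pos by (simp add: lookup_add)
    then have "monom 1 (e + \<beta> - Poly_Mapping.single j 1 + Poly_Mapping.single i 1) \<in> I"
      using B bI ij unfolding borel_fixed_def by blast
    moreover have "e + \<beta> - Poly_Mapping.single j 1 + Poly_Mapping.single i 1
        = e + (\<beta> - Poly_Mapping.single j 1 + Poly_Mapping.single i 1)"
      using pos by (intro poly_mapping_eqI) (auto simp: lookup_add lookup_minus lookup_single when_def)
    moreover have "Poly_Mapping.keys (\<beta> - Poly_Mapping.single j 1 + Poly_Mapping.single i 1) \<subseteq> {..n}"
    proof -
      have jk: "j \<in> Poly_Mapping.keys \<beta>" using pos by (simp add: in_keys_iff)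
      have "Poly_Mapping.keys (\<beta> - Poly_Mapping.single j 1 + Poly_Mapping.single i 1)
          \<subseteq> Poly_Mapping.keys (\<beta> - Poly_Mapping.single j 1) \<union> Poly_Mapping.keys (Poly_Mapping.single i (1::nat))"
        by (rule keys_add)
      also have "\<dots> \<subseteq> Poly_Mapping.keys \<beta> \<union> {i}" using keys_minus_sub[of \<beta>] by auto
      finally have sub: "Poly_Mapping.keys (\<beta> - Poly_Mapping.single j 1 + Poly_Mapping.single i 1) \<subseteq> Poly_Mapping.keys \<beta> \<union> {i}" .
      have "j \<le> n" using kb jk by (meson atMost_iff subsetD)
      then have "Poly_Mapping.keys \<beta> \<union> {i} \<subseteq> {..n}" using kb ij by auto
      with sub show ?thesis by (rule subset_trans)
    qed
    ultimately show "monom 1 (\<beta> - Poly_Mapping.single j 1 + Poly_Mapping.single i 1) \<in> J"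
      using monJ by simp
  qed
  have MI_shift: "MI n I t = (\<lambda>\<beta>. e + \<beta>) ` MI n J (t - A)" if tA: "A \<le> t" for t
  proof (intro set_eqI iffI)
    fix \<alpha> assume a: "\<alpha> \<in> MI n I t"
    then have aM: "\<alpha> \<in> Mons n t" and aI: "monom 1 \<alpha> \<in> I" by (auto simp: MI_def)
    have "\<alpha> \<in> {\<alpha> \<in> Mons n t. A \<le> Poly_Mapping.lookup \<alpha> 0}" using aM div[OF aI] by simp
    then obtain \<beta> where b: "\<alpha> = e + \<beta>" "\<beta> \<in> Mons n (t - A)"
      unfolding shift_image[OF tA] e_def by blast
    have "monom 1 \<beta> \<in> J" using monJ b aI by (auto simp: Mons_def)
    with b show "\<alpha> \<in> (\<lambda>\<beta>. e + \<beta>) ` MI n J (t - A)" by (auto simp: MI_def)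
  next
    fix \<alpha> assume "\<alpha> \<in> (\<lambda>\<beta>. e + \<beta>) ` MI n J (t - A)"
    then obtain \<beta> where b: "\<alpha> = e + \<beta>" "\<beta> \<in> Mons n (t - A)" "monom 1 \<beta> \<in> J"
      by (auto simp: MI_def)
    have "\<alpha> \<in> {\<alpha> \<in> Mons n t. A \<le> Poly_Mapping.lookup \<alpha> 0}"
      unfolding shift_image[OF tA] e_def using b by (auto simp: e_def)
    moreover have "monom 1 \<alpha> \<in> I" using monJ b by auto
    ultimately show "\<alpha> \<in> MI n I t" by (auto simp: MI_def)
  qed
  from hp obtain t0 where t0: "\<And>t. t0 \<le> t \<Longrightarrow> real (hilbert_fn n I t) = Qpoly ((n - 1) # is) (A # as) t"
    by (auto simp: has_hilbert_poly_def)
  have J_hp: "has_hilbert_poly n J (Qpoly is as)"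
    unfolding has_hilbert_poly_def
  proof (intro exI allI impI)
    fix s assume s: "t0 \<le> s"
    define t where "t = s + A"
    have tA: "A \<le> t" and tt0: "t0 \<le> t" and st: "t - A = s" using s by (auto simp: t_def)
    have cardI: "card (MI n I t) = card (MI n J s)"
      unfolding MI_shift[OF tA] st by (rule card_image[OF inj_shift])
    have finJ: "card (MI n J s) \<le> card (Mons n s)" by (rule card_mono[OF finite_Mons MI_subset])
    have finI: "card (MI n I t) \<le> card (Mons n t)" by (rule card_mono[OF finite_Mons MI_subset])
    have "real (card (Mons n t)) - real (card (MI n J s)) = real (hilbert_fn n I t)"
      using finI cardI by (simp add: hilbert_fn_monomial[OF MIi] of_nat_diff)
    also have "\<dots> = real (card (Mons n t)) - real (card (Mons n s)) + Qpoly is as s"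
      using t0[OF tt0] Qpoly_Cons[OF data ne top tA] by (simp add: st real_card_Mons)
    finally have "real (card (Mons n s)) - real (card (MI n J s)) = Qpoly is as s" by simp
    then show "real (hilbert_fn n J s) = Qpoly is as s"
      using finJ by (simp add: hilbert_fn_monomial[OF J_mon] of_nat_diff)
  qed
  show ?thesis using J_ideal J_sat J_borel J_hp I_eq by blast
qed


theorem corollary2p3:
  fixes n A :: nat and "is" as :: "nat list" and I :: "('k::field_char_0) mpoly set"
  assumes alg_closed: "\<forall>p::'k poly. 0 < degree p \<longrightarrow> (\<exists>x. poly p x = 0)"
    and data: "macaulay_data is as" and ne: "is \<noteq> []" and top: "hd is + 2 \<le> n"
    and Apos: "0 < A"
    and I_hom: "homogeneous_ideal n I" and I_sat: "saturated n I"
    and I_hp: "has_hilbert_poly n I (Qpoly ((n - 1) # is) (A # as))"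
  shows "borel_fixed n I \<longleftrightarrow>
    (\<exists>J. is_ideal n J \<and> saturated n J \<and> borel_fixed n J \<and> has_hilbert_poly n J (Qpoly is as)
       \<and> I = {monom 1 (Poly_Mapping.single 0 A) * g | g. g \<in> J})"
proof
  assume B: "borel_fixed n I"
  show "\<exists>J. is_ideal n J \<and> saturated n J \<and> borel_fixed n J \<and> has_hilbert_poly n J (Qpoly is as)
       \<and> I = {monom 1 (Poly_Mapping.single 0 A) * g | g. g \<in> J}"
    by (rule quotient_ideal[OF data ne top B I_sat I_hp])
next
  assume "\<exists>J. is_ideal n J \<and> saturated n J \<and> borel_fixed n J \<and> has_hilbert_poly n J (Qpoly is as)
       \<and> I = {monom 1 (Poly_Mapping.single 0 A) * g | g. g \<in> J}"
  then obtain J :: "'k mpoly set" where J: "borel_fixed n J" "I = {monom 1 (Poly_Mapping.single 0 A) * g | g. g \<in> J}"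
    by blast
  have "is_ideal n I" using I_hom by (simp add: homogeneous_ideal_def)
  then show "borel_fixed n I" by (rule borel_of_product[OF _ J(1) J(2)])
qed

end
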